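(* Let $r\ge 3$ and let $t\ge 6$ be even. Then there exists a $(r,t,4)$-staircase graph $G$ such that the graph $G-v_\infty$ (obtained by deleting $v_\infty$ and its incident edges) admits a proper edge colouring with $r+1$ colours (edges sharing a vertex receive different colours).
   Context: Staircase graph: Let $r\ge 2$ and $t\ge 2$ be integers, $s=\lfloor (t-1)/2\rfloor$, and $a_0$ a positive integer; if $t$ is odd assume $t\ge 3$. An $(r,t,a_0)$-staircase graph is a finite simple graph $G$ whose vertex set is a disjoint union $\{v_\infty\}\cup V_0\cup V_1\cup\cdots\cup V_s$ such that: $|V_0|=a_0$ and $v_\infty$ is adjacent to every vertex of $V_0$ and to no other vertex; for each $i$ with $0\le i\le s-1$ (if $t$ is even) or $0\le i\le s-2$ (if $t$ is odd), every vertex of $V_i$ has exactly $r$ neighbours in $V_{i+1}$ and every vertex of $V_{i+1}$ has exactly one neighbour in $V_i$; if $t$ is even, every vertex of $V_s$ has exactly $r$ neighbours in $V_s$; if $t$ is odd, every vertex of $V_{s-1}$ has exactly $r$ neighbours in $V_s$ and every vertex of $V_s$ has exactly $r+1$ neighbours in $V_{s-1}$; and there are no other edges. *)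

theory Defs
  imports Main
begin

definition simple_graph :: "'a set \<Rightarrow> ('a \<Rightarrow> 'a \<Rightarrow> bool) \<Rightarrow> bool" where
  "simple_graph V E \<longleftrightarrow> finite V \<and> (\<forall>x y. E x y \<longrightarrow> E y x)
     \<and> (\<forall>x. \<not> E x x) \<and> (\<forall>x y. E x y \<longrightarrow> x \<in> V \<and> y \<in> V)"

definition staircase ::
  "nat \<Rightarrow> nat \<Rightarrow> nat \<Rightarrow> 'a set \<Rightarrow> ('a \<Rightarrow> 'a \<Rightarrow> bool) \<Rightarrow> 'a \<Rightarrow> (nat \<Rightarrow> 'a set) \<Rightarrow> bool" where
  "staircase r t a0 V E vinf L \<longleftrightarrow>
    (let s = (t - 1) div 2 in
     simple_graph V E
     \<and> V = insert vinf (\<Union>i\<in>{..s}. L i)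
     \<and> (\<forall>i\<le>s. vinf \<notin> L i)
     \<and> (\<forall>i\<le>s. \<forall>j\<le>s. i \<noteq> j \<longrightarrow> L i \<inter> L j = {})
     \<and> card (L 0) = a0
     \<and> (\<forall>x. E vinf x \<longleftrightarrow> x \<in> L 0)
     \<and> (\<forall>i. (if even t then i < s else i + 2 \<le> s) \<longrightarrow>
           (\<forall>v\<in>L i. card {w\<in>L (Suc i). E v w} = r)
         \<and> (\<forall>w\<in>L (Suc i). card {v\<in>L i. E w v} = 1))
     \<and> (even t \<longrightarrow> (\<forall>v\<in>L s. card {w\<in>L s. E v w} = r))
     \<and> (odd t \<longrightarrow> (\<forall>v\<in>L (s - 1). card {w\<in>L s. E v w} = r)
                  \<and> (\<forall>w\<in>L s. card {v\<in>L (s - 1). E w v} = r + 1))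
     \<and> (\<forall>x y. E x y \<longrightarrow>
           x = vinf \<or> y = vinf
         \<or> (\<exists>i<s. (x \<in> L i \<and> y \<in> L (Suc i)) \<or> (y \<in> L i \<and> x \<in> L (Suc i)))
         \<or> (even t \<and> x \<in> L s \<and> y \<in> L s)))"

definition proper_edge_colouring_minus ::
  "'a set \<Rightarrow> ('a \<Rightarrow> 'a \<Rightarrow> bool) \<Rightarrow> 'a \<Rightarrow> nat \<Rightarrow> ('a \<Rightarrow> 'a \<Rightarrow> nat) \<Rightarrow> bool" where
  "proper_edge_colouring_minus V E u k c \<longleftrightarrow>
     (\<forall>x y. E x y \<and> x \<noteq> u \<and> y \<noteq> u \<longrightarrow> c x y = c y x \<and> c x y < k)
   \<and> (\<forall>x y z. E x y \<and> E x z \<and> y \<noteq> z \<and> x \<noteq> u \<and> y \<noteq> u \<and> z \<noteq> u \<longrightarrow> c x y \<noteq> c x z)"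

end

theory Submission
  imports Defs "HOL-Library.Countable"
begin

lemma modeq_close: fixes a b r :: nat
  assumes "a mod r = b mod r" "a \<le> b" "b < a + r" shows "a = b"
proof -
  have "r dvd b - a" using assms(1,2) by (metis mod_eq_dvd_iff_nat)
  moreover have "b - a < r" using assms by linarith
  ultimately have "b - a = 0" by (metis dvd_imp_le not_less zero_less_iff_neq_zero)
  thus ?thesis using assms(2) by simp
qed

lemma F1: fixes a n d :: nat assumes "a < Suc n" "d < n" shows "(a + 1 + d) mod Suc n \<noteq> a"
proof
  assume h: "(a + 1 + d) mod Suc n = a"
  have "a mod Suc n = (a+1+d) mod Suc n" using h assms by simp
  from modeq_close[OF this] assms show False by simp
qed

lemma F2: fixes a n d1 d2 :: nat assumes "d1 < n" "d2 < n"
  and h: "(a + 1 + d1) mod Suc n = (a + 1 + d2) mod Suc n" shows "d1 = d2"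
proof (cases "d1 \<le> d2")
  case True thus ?thesis using modeq_close[OF h] assms by simp
next
  case False thus ?thesis using modeq_close[OF h[symmetric]] assms by simp
qed

lemma F3: fixes d t r :: nat assumes "d < r" "0 < t" "t < r" shows "(d + t) mod r \<noteq> d"
proof
  assume h: "(d + t) mod r = d"
  have "d mod r = (d + t) mod r" using h assms by simp
  from modeq_close[OF this] assms show False by simp
qed

lemma F4: fixes d t1 t2 r :: nat assumes "t1 < r" "t2 < r" "(d + t1) mod r = (d + t2) mod r"
  shows "t1 = t2"
proof (cases "t1 \<le> t2")
  case True thus ?thesis using modeq_close[OF assms(3)] assms by simp
next
  case False thus ?thesis using modeq_close[OF assms(3)[symmetric]] assms by simp
qed

lemma F5: fixes a t r :: nat assumes "0 < t" "t < r" shows "(a + t) mod r \<noteq> (a + 2*t) mod r"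
proof
  assume h: "(a + t) mod r = (a + 2*t) mod r"
  from modeq_close[OF h] assms show False by simp
qed

lemma F6: fixes a1 a2 t1 t2 r :: nat assumes "t1 < r" "t2 < r"
  and h1: "(a1 + t1) mod r = (a2 + t2) mod r" and h2: "(a1 + 2*t1) mod r = (a2 + 2*t2) mod r"
  shows "t1 = t2"
proof -
  have e1: "int r dvd (int a1 + int t1) - (int a2 + int t2)"
    using h1 by (metis mod_eq_dvd_iff of_nat_add zmod_int)
  have e2: "int r dvd (int a1 + 2 * int t1) - (int a2 + 2 * int t2)"
    using h2 by (metis mod_eq_dvd_iff of_nat_add of_nat_mult of_nat_numeral zmod_int)
  have "int r dvd ((int a1 + 2 * int t1) - (int a2 + 2 * int t2)) - ((int a1 + int t1) - (int a2 + int t2))"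
    using e1 e2 dvd_diff by blast
  hence d: "int r dvd int t1 - int t2" by (simp add: algebra_simps)
  show ?thesis
  proof (rule ccontr)
    assume "t1 \<noteq> t2"
    hence "int t1 - int t2 \<noteq> 0" by simp
    from dvd_imp_le_int[OF this d] assms show False by simp
  qed
qed

type_synonym vt = "(nat \<times> nat \<times> nat) option"

fun colt :: "nat \<Rightarrow> nat \<Rightarrow> nat \<Rightarrow> nat" where
  "colt r 0 z = 0"
| "colt r (Suc i) z = (colt r i (z div r) + 1 + z mod r) mod Suc r"

lemma colt_lt: "colt r i z < Suc r" by (cases i) auto

definition lay :: "nat \<Rightarrow> nat \<Rightarrow> vt set" where
  "lay r i = {Some (i, p, z) | p z. p < 4 \<and> z < r ^ i}"

definition nbR :: "nat \<Rightarrow> nat \<Rightarrow> nat \<Rightarrow> nat \<Rightarrow> nat \<times> nat" where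
  "nbR r p z t = (if 2*t < r then Suc p else (p+3) mod 4, (z div r)*r + (z mod r + 2*t) mod r)"

definition nbL :: "nat \<Rightarrow> nat \<Rightarrow> nat \<Rightarrow> nat \<Rightarrow> nat \<times> nat" where
  "nbL r p z t = (if 2*t < r then p - 1 else (p+1) mod 4, (z div r)*r + (z mod r + 2*r - 2*t) mod r)"

definition tof :: "nat \<Rightarrow> nat \<Rightarrow> nat \<Rightarrow> nat \<Rightarrow> nat \<Rightarrow> nat" where
  "tof r p z p' z' = (let d = (z' mod r + r - z mod r) mod r in if p' = Suc p then d div 2 else (d + r) div 2)"

lemma pow_bound: fixes z r i :: nat assumes "z < r ^ Suc i" "x < r" shows "(z div r) * r + x < r ^ Suc i"
proof -
  have r: "r > 0" using assms by simp
  have "z div r < r ^ i" using assms(1) r by (simp add: div_less_iff_less_mult mult.commute)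
  hence "z div r + 1 \<le> r ^ i" by simp
  hence "(z div r + 1) * r \<le> r ^ i * r" by (rule mult_right_mono) simp
  thus ?thesis using assms(2) by (simp add: algebra_simps)
qed

lemma child_bound: fixes z r i d :: nat assumes "z < r ^ i" "d < r" shows "z * r + d < r ^ Suc i"
proof -
  have "z + 1 \<le> r ^ i" using assms by simp
  hence "(z + 1) * r \<le> r ^ i * r" by (rule mult_right_mono) simp
  thus ?thesis using assms(2) by (simp add: algebra_simps)
qed

lemma nbR_props:
  assumes "even p" "p < 4" "z < r ^ Suc s" "t < r"
  shows "fst (nbR r p z t) < 4" "odd (fst (nbR r p z t))" "snd (nbR r p z t) < r ^ Suc s"
    "snd (nbR r p z t) div r = z div r" "snd (nbR r p z t) mod r = (z mod r + 2*t) mod r"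
proof -
  have p: "p = 0 \<or> p = 2" using assms by presburger
  show "fst (nbR r p z t) < 4" "odd (fst (nbR r p z t))" using p by (auto simp: nbR_def)
  show "snd (nbR r p z t) < r ^ Suc s" unfolding nbR_def using pow_bound assms by simp
  have r: "r > 0" using assms by simp
  show "snd (nbR r p z t) div r = z div r" "snd (nbR r p z t) mod r = (z mod r + 2*t) mod r"
    unfolding nbR_def using r by simp_all
qed

lemma nbL_props:
  assumes "odd p" "p < 4" "z < r ^ Suc s" "t < r"
  shows "fst (nbL r p z t) < 4" "even (fst (nbL r p z t))" "snd (nbL r p z t) < r ^ Suc s"
    "snd (nbL r p z t) div r = z div r" "snd (nbL r p z t) mod r = (z mod r + 2*r - 2*t) mod r"
proof -
  have p: "p = 1 \<or> p = 3" using assms by presburger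
  show "fst (nbL r p z t) < 4" "even (fst (nbL r p z t))" using p by (auto simp: nbL_def)
  show "snd (nbL r p z t) < r ^ Suc s" unfolding nbL_def using pow_bound assms by simp
  have r: "r > 0" using assms by simp
  show "snd (nbL r p z t) div r = z div r" "snd (nbL r p z t) mod r = (z mod r + 2*r - 2*t) mod r"
    unfolding nbL_def using r by simp_all
qed

lemma arith1: fixes d t r :: nat assumes "d < r" "t < r"
  shows "((d + 2*t) mod r + 2*r - 2*t) mod r = d"
proof -
  have "((d + 2*t) mod r + 2*r - 2*t) mod r = ((d + 2*t) mod r + (2*r - 2*t)) mod r"
    using assms by simp
  also have "\<dots> = (d + 2*t + (2*r - 2*t)) mod r" by (simp add: mod_add_left_eq)
  also have "d + 2*t + (2*r - 2*t) = d + r*2" using assms by simp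
  finally show ?thesis using assms by simp
qed

lemma arith2: fixes e t r :: nat assumes "e < r" "t < r"
  shows "((e + 2*r - 2*t) mod r + 2*t) mod r = e"
proof -
  have "((e + 2*r - 2*t) mod r + 2*t) mod r = (e + 2*r - 2*t + 2*t) mod r" by (simp add: mod_add_left_eq)
  also have "e + 2*r - 2*t + 2*t = e + r*2" using assms by simp
  finally show ?thesis using assms by simp
qed

lemma arith3: fixes d t r :: nat assumes "d < r" "t < r"
  shows "((d + 2*t) mod r + r - d) mod r = (2*t) mod r"
proof -
  have "((d + 2*t) mod r + r - d) mod r = ((d + 2*t) mod r + (r - d)) mod r" using assms by simp
  also have "\<dots> = (d + 2*t + (r - d)) mod r" by (simp add: mod_add_left_eq)
  also have "d + 2*t + (r - d) = 2*t + r" using assms by simp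
  finally show ?thesis by simp
qed

lemma divmod_eq: fixes a b r :: nat assumes "a div r = b div r" "a mod r = b mod r" shows "a = b"
  using assms by (metis div_mult_mod_eq)

lemma nbLR:
  assumes "even p" "p < 4" "z < r ^ Suc s" "t < r"
  shows "nbL r (fst (nbR r p z t)) (snd (nbR r p z t)) t = (p, z)"
proof -
  have p: "p = 0 \<or> p = 2" using assms by presburger
  have r: "r > 0" using assms by simp
  have "fst (nbL r (fst (nbR r p z t)) (snd (nbR r p z t)) t) = p"
    using p by (auto simp: nbR_def nbL_def)
  moreover have "snd (nbL r (fst (nbR r p z t)) (snd (nbR r p z t)) t) = z"
  proof (rule divmod_eq)
    show "snd (nbL r (fst (nbR r p z t)) (snd (nbR r p z t)) t) div r = z div r"
      using r by (simp add: nbR_def nbL_def)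
    show "snd (nbL r (fst (nbR r p z t)) (snd (nbR r p z t)) t) mod r = z mod r"
      using r assms arith1[of "z mod r" r t] by (simp add: nbR_def nbL_def)
  qed
  ultimately show ?thesis by (metis prod.collapse)
qed

lemma nbRL:
  assumes "odd p" "p < 4" "z < r ^ Suc s" "t < r"
  shows "nbR r (fst (nbL r p z t)) (snd (nbL r p z t)) t = (p, z)"
proof -
  have p: "p = 1 \<or> p = 3" using assms by presburger
  have r: "r > 0" using assms by simp
  have "fst (nbR r (fst (nbL r p z t)) (snd (nbL r p z t)) t) = p"
    using p by (auto simp: nbR_def nbL_def)
  moreover have "snd (nbR r (fst (nbL r p z t)) (snd (nbL r p z t)) t) = z"
  proof (rule divmod_eq)
    show "snd (nbR r (fst (nbL r p z t)) (snd (nbL r p z t)) t) div r = z div r"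
      using r by (simp add: nbR_def nbL_def)
    show "snd (nbR r (fst (nbL r p z t)) (snd (nbL r p z t)) t) mod r = z mod r"
      using r assms arith2[of "z mod r" r t] by (simp add: nbR_def nbL_def)
  qed
  ultimately show ?thesis by (metis prod.collapse)
qed

lemma tof_nbR:
  assumes "even p" "p < 4" "t < r"
  shows "tof r p z (fst (nbR r p z t)) (snd (nbR r p z t)) = t"
proof -
  have p: "p = 0 \<or> p = 2" using assms by presburger
  have r: "r > 0" using assms by simp
  define z' where "z' = snd (nbR r p z t)"
  define p' where "p' = fst (nbR r p z t)"
  have m: "z' mod r = (z mod r + 2*t) mod r" unfolding z'_def using r by (simp add: nbR_def)
  have dd: "(z' mod r + r - z mod r) mod r = (2*t) mod r"
    unfolding m using arith3[of "z mod r" r t] r assms by simp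
  have tf: "tof r p z p' z' = (if p' = Suc p then ((2*t) mod r) div 2 else ((2*t) mod r + r) div 2)"
    unfolding tof_def Let_def dd by simp
  show ?thesis
  proof (cases "2*t < r")
    case True
    hence "p' = Suc p" unfolding p'_def nbR_def by simp
    moreover have "(2*t) mod r = 2*t" using True by simp
    ultimately show ?thesis using tf p'_def z'_def by simp
  next
    case False
    have "p' \<noteq> Suc p" using p False unfolding p'_def nbR_def by auto
    moreover have "(2*t) mod r = (2*t - r) mod r" using False by (intro le_mod_geq) simp
    moreover have "(2*t - r) mod r = 2*t - r" using assms by (intro mod_less) simp
    ultimately have "tof r p z p' z' = (2*t - r + r) div 2" using tf by simp
    also have "\<dots> = t" using False by simp
    finally show ?thesis using p'_def z'_def by simp
  qed
qed

definition treeE :: "nat \<Rightarrow> nat \<Rightarrow> vt \<Rightarrow> vt \<Rightarrow> bool" where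
  "treeE r s u w \<longleftrightarrow> (\<exists>i p z. i < s \<and> p < 4 \<and> z < r ^ Suc i \<and> u = Some (i, p, z div r) \<and> w = Some (Suc i, p, z))"

definition botE :: "nat \<Rightarrow> nat \<Rightarrow> vt \<Rightarrow> vt \<Rightarrow> bool" where
  "botE r s u w \<longleftrightarrow> (\<exists>p z t. p < 4 \<and> even p \<and> z < r ^ s \<and> t < r \<and> u = Some (s, p, z) \<and> w = Some (s, nbR r p z t))"

definition apexE :: "vt \<Rightarrow> vt \<Rightarrow> bool" where
  "apexE u w \<longleftrightarrow> u = None \<and> (\<exists>p<4. w = Some (0, p, 0))"

definition EE :: "nat \<Rightarrow> nat \<Rightarrow> vt \<Rightarrow> vt \<Rightarrow> bool" where
  "EE r s u w \<longleftrightarrow> treeE r s u w \<or> treeE r s w u \<or> botE r s u w \<or> botE r s w u \<or> apexE u w \<or> apexE w u"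

lemma nbR_props':
  assumes "even p" "p < 4" "z < r ^ s" "t < r" "s \<ge> 1"
  shows "fst (nbR r p z t) < 4" "odd (fst (nbR r p z t))" "snd (nbR r p z t) < r ^ s"
    "snd (nbR r p z t) div r = z div r" "snd (nbR r p z t) mod r = (z mod r + 2*t) mod r"
  using nbR_props[of p z r "s - 1" t] assms by simp_all

lemma nbL_props':
  assumes "odd p" "p < 4" "z < r ^ s" "t < r" "s \<ge> 1"
  shows "fst (nbL r p z t) < 4" "even (fst (nbL r p z t))" "snd (nbL r p z t) < r ^ s"
    "snd (nbL r p z t) div r = z div r" "snd (nbL r p z t) mod r = (z mod r + 2*r - 2*t) mod r"
  using nbL_props[of p z r "s - 1" t] assms by simp_all

lemma nbLR': assumes "even p" "p < 4" "z < r ^ s" "t < r" "s \<ge> 1"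
  shows "nbL r (fst (nbR r p z t)) (snd (nbR r p z t)) t = (p, z)"
  using nbLR[of p z r "s - 1" t] assms by simp

lemma nbRL': assumes "odd p" "p < 4" "z < r ^ s" "t < r" "s \<ge> 1"
  shows "nbR r (fst (nbL r p z t)) (snd (nbL r p z t)) t = (p, z)"
  using nbRL[of p z r "s - 1" t] assms by simp

lemma N_child:
  assumes "i < s" "p < 4" "z0 < r ^ i"
  shows "{w \<in> lay r (Suc i). EE r s (Some (i, p, z0)) w} = (\<lambda>d. Some (Suc i, p, z0 * r + d)) ` {..<r}"
proof (intro set_eqI iffI)
  fix w assume "w \<in> {w \<in> lay r (Suc i). EE r s (Some (i, p, z0)) w}"
  then obtain p' z' where w: "w = Some (Suc i, p', z')" "p' < 4" "z' < r ^ Suc i"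
    and e: "EE r s (Some (i, p, z0)) w" by (auto simp: lay_def)
  have "treeE r s (Some (i, p, z0)) w" using e w assms
    by (auto simp: EE_def treeE_def botE_def apexE_def)
  then have "p' = p" "z' div r = z0" using w by (auto simp: treeE_def)
  moreover have "r > 0" using w by (cases r) auto
  ultimately show "w \<in> (\<lambda>d. Some (Suc i, p, z0 * r + d)) ` {..<r}"
    using w by (intro image_eqI[where x = "z' mod r"]) (auto simp: mult.commute)
next
  fix w assume "w \<in> (\<lambda>d. Some (Suc i, p, z0 * r + d)) ` {..<r}"
  then obtain d where d: "d < r" "w = Some (Suc i, p, z0 * r + d)" by auto
  have b: "z0 * r + d < r ^ Suc i" using child_bound assms d by blast
  have "(z0 * r + d) div r = z0" using d by simp
  hence "treeE r s (Some (i, p, z0)) w" unfolding treeE_def using d b assms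
    by (intro exI[of _ i] exI[of _ p] exI[of _ "z0 * r + d"]) simp
  thus "w \<in> {w \<in> lay r (Suc i). EE r s (Some (i, p, z0)) w}"
    using d b assms by (auto simp: EE_def lay_def)
qed

lemma N_parent:
  assumes "i < s" "p < 4" "z < r ^ Suc i"
  shows "{v \<in> lay r i. EE r s (Some (Suc i, p, z)) v} = {Some (i, p, z div r)}"
proof (intro set_eqI iffI)
  fix v assume "v \<in> {v \<in> lay r i. EE r s (Some (Suc i, p, z)) v}"
  then obtain p' z' where v: "v = Some (i, p', z')" 
    and e: "EE r s (Some (Suc i, p, z)) v" by (auto simp: lay_def)
  have "treeE r s v (Some (Suc i, p, z))" using e v assms
    by (auto simp: EE_def treeE_def botE_def apexE_def)
  thus "v \<in> {Some (i, p, z div r)}" using v by (auto simp: treeE_def)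
next
  fix v assume "v \<in> {Some (i, p, z div r)}"
  hence v: "v = Some (i, p, z div r)" by simp
  have r: "r > 0" using assms by (cases r) auto
  have "z div r < r ^ i" using assms r by (simp add: div_less_iff_less_mult mult.commute)
  moreover have "treeE r s v (Some (Suc i, p, z))" using v assms unfolding treeE_def by blast
  ultimately show "v \<in> {v \<in> lay r i. EE r s (Some (Suc i, p, z)) v}"
    using v assms by (auto simp: EE_def lay_def)
qed

lemma N_botL:
  assumes "s \<ge> 1" "even p" "p < 4" "z < r ^ s"
  shows "{w \<in> lay r s. EE r s (Some (s, p, z)) w} = (\<lambda>t. Some (s, nbR r p z t)) ` {..<r}"
proof (intro set_eqI iffI)
  fix w assume "w \<in> {w \<in> lay r s. EE r s (Some (s, p, z)) w}"
  then obtain p' z' where w: "w = Some (s, p', z')" "p' < 4" "z' < r ^ s"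
    and e: "EE r s (Some (s, p, z)) w" by (auto simp: lay_def)
  have nb: "\<not> botE r s w (Some (s, p, z))"
  proof
    assume "botE r s w (Some (s, p, z))"
    then obtain pa za t where "pa < 4" "even pa" "za < r ^ s" "t < r" "(p, z) = nbR r pa za t"
      by (auto simp: botE_def)
    thus False using nbR_props'(2)[of pa za r s t] assms by (metis fst_conv)
  qed
  have "botE r s (Some (s, p, z)) w" using e w nb
    by (auto simp: EE_def treeE_def apexE_def)
  thus "w \<in> (\<lambda>t. Some (s, nbR r p z t)) ` {..<r}" by (auto simp: botE_def)
next
  fix w assume "w \<in> (\<lambda>t. Some (s, nbR r p z t)) ` {..<r}"
  then obtain t where t: "t < r" "w = Some (s, nbR r p z t)" by auto
  have "botE r s (Some (s, p, z)) w" unfolding botE_def using t assms by blast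
  moreover have "w \<in> lay r s" using t nbR_props'[of p z r s t] assms
    unfolding lay_def by (metis (mono_tags, lifting) mem_Collect_eq prod.collapse)
  ultimately show "w \<in> {w \<in> lay r s. EE r s (Some (s, p, z)) w}" by (auto simp: EE_def)
qed

lemma N_botR:
  assumes "s \<ge> 1" "odd p" "p < 4" "z < r ^ s"
  shows "{w \<in> lay r s. EE r s (Some (s, p, z)) w} = (\<lambda>t. Some (s, nbL r p z t)) ` {..<r}"
proof (intro set_eqI iffI)
  fix w assume "w \<in> {w \<in> lay r s. EE r s (Some (s, p, z)) w}"
  then obtain p' z' where w: "w = Some (s, p', z')" "p' < 4" "z' < r ^ s"
    and e: "EE r s (Some (s, p, z)) w" by (auto simp: lay_def)
  have nb: "\<not> botE r s (Some (s, p, z)) w" using assms by (auto simp: botE_def)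
  have "botE r s w (Some (s, p, z))" using e w nb
    by (auto simp: EE_def treeE_def apexE_def)
  then obtain pa za t where h: "pa < 4" "even pa" "za < r ^ s" "t < r" "(p, z) = nbR r pa za t"
      "w = Some (s, pa, za)"
    by (auto simp: botE_def)
  have "nbL r p z t = (pa, za)" using nbLR'[of pa za r s t] h assms by (metis fst_conv snd_conv)
  thus "w \<in> (\<lambda>t. Some (s, nbL r p z t)) ` {..<r}" using h by (intro image_eqI[where x = t]) auto
next
  fix w assume "w \<in> (\<lambda>t. Some (s, nbL r p z t)) ` {..<r}"
  then obtain t where t: "t < r" "w = Some (s, nbL r p z t)" by auto
  have "botE r s w (Some (s, p, z))" unfolding botE_def
    using t assms nbL_props'[of p z r s t] nbRL'[of p z r s t]
    by (intro exI[of _ "fst (nbL r p z t)"] exI[of _ "snd (nbL r p z t)"] exI[of _ t]) simp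
  moreover have "w \<in> lay r s" using t nbL_props'[of p z r s t] assms
    unfolding lay_def by (metis (mono_tags, lifting) mem_Collect_eq prod.collapse)
  ultimately show "w \<in> {w \<in> lay r s. EE r s (Some (s, p, z)) w}" by (auto simp: EE_def)
qed

lemma card_child:
  assumes "i < s" "p < 4" "z0 < r ^ i"
  shows "card {w \<in> lay r (Suc i). EE r s (Some (i, p, z0)) w} = r"
  unfolding N_child[OF assms] by (subst card_image) (auto simp: inj_on_def)

lemma card_botL:
  assumes "s \<ge> 1" "even p" "p < 4" "z < r ^ s"
  shows "card {w \<in> lay r s. EE r s (Some (s, p, z)) w} = r"
proof -
  have "inj_on (\<lambda>t. Some (s, nbR r p z t)) {..<r}"
  proof (rule inj_onI)
    fix t1 t2 assume "t1 \<in> {..<r}" "t2 \<in> {..<r}" "Some (s, nbR r p z t1) = Some (s, nbR r p z t2)"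
    hence "nbR r p z t1 = nbR r p z t2" by simp
    hence "tof r p z (fst (nbR r p z t1)) (snd (nbR r p z t1)) = tof r p z (fst (nbR r p z t2)) (snd (nbR r p z t2))"
      by simp
    moreover have "tof r p z (fst (nbR r p z t1)) (snd (nbR r p z t1)) = t1"
      using tof_nbR[of p t1 r z] assms \<open>t1 \<in> {..<r}\<close> by simp
    moreover have "tof r p z (fst (nbR r p z t2)) (snd (nbR r p z t2)) = t2"
      using tof_nbR[of p t2 r z] assms \<open>t2 \<in> {..<r}\<close> by simp
    ultimately show "t1 = t2" by simp
  qed
  thus ?thesis unfolding N_botL[OF assms] by (simp add: card_image)
qed

lemma card_botR:
  assumes "s \<ge> 1" "odd p" "p < 4" "z < r ^ s"
  shows "card {w \<in> lay r s. EE r s (Some (s, p, z)) w} = r"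
proof -
  have "inj_on (\<lambda>t. Some (s, nbL r p z t)) {..<r}"
  proof (rule inj_onI)
    fix t1 t2 assume t: "t1 \<in> {..<r}" "t2 \<in> {..<r}" "Some (s, nbL r p z t1) = Some (s, nbL r p z t2)"
    define pa where "pa = fst (nbL r p z t1)"
    define za where "za = snd (nbL r p z t1)"
    have n1: "nbL r p z t1 = (pa, za)" by (simp add: pa_def za_def)
    have n2: "nbL r p z t2 = (pa, za)" using t n1 by simp
    have pa: "even pa" "pa < 4" using nbL_props'[of p z r s t1] assms t pa_def by auto
    have "nbR r pa za t1 = (p, z)" using nbRL'[of p z r s t1] assms t n1 by simp
    hence "tof r pa za p z = t1" using tof_nbR[of pa t1 r za] pa t by simp
    moreover have "nbR r pa za t2 = (p, z)" using nbRL'[of p z r s t2] assms t n2 by simp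
    hence "tof r pa za p z = t2" using tof_nbR[of pa t2 r za] pa t by simp
    ultimately show "t1 = t2" by simp
  qed
  thus ?thesis unfolding N_botR[OF assms] by (simp add: card_image)
qed

definition botc :: "nat \<Rightarrow> nat \<Rightarrow> nat \<Rightarrow> nat \<Rightarrow> nat" where
  "botc r s z t = (let P = colt r (s - 1) (z div r) in
     if t = 0 then P else (P + 1 + (z mod r + t) mod r) mod Suc r)"

definition cc :: "nat \<Rightarrow> nat \<Rightarrow> vt \<Rightarrow> vt \<Rightarrow> nat" where
  "cc r s u w = (case u of None \<Rightarrow> 0 | Some (i, p, z) \<Rightarrow> (case w of None \<Rightarrow> 0 | Some (j, p', z') \<Rightarrow>
     if i < j then colt r j z' else if j < i then colt r i z
     else if even p then botc r s z (tof r p z p' z') else botc r s z' (tof r p' z' p z)))"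

lemma cc_lt: "cc r s u w < Suc r"
  by (auto simp: cc_def botc_def Let_def colt_lt split: option.split)

lemma colt_s: "s \<ge> 1 \<Longrightarrow> colt r s z = (colt r (s - 1) (z div r) + 1 + z mod r) mod Suc r"
  by (cases s) auto

lemma nb_cases:
  assumes r: "r \<ge> 1" and s: "s \<ge> 1" and e: "EE r s (Some (i, p, z0)) y" and yn: "y \<noteq> None"
  shows "(\<exists>i'. i = Suc i' \<and> y = Some (i', p, z0 div r) \<and> cc r s (Some (i, p, z0)) y = colt r i z0)
    \<or> (\<exists>d<r. i < s \<and> y = Some (Suc i, p, z0 * r + d) \<and> cc r s (Some (i, p, z0)) y = (colt r i z0 + 1 + d) mod Suc r)
    \<or> (\<exists>t<r. i = s \<and> even p \<and> p < 4 \<and> z0 < r ^ s \<and> y = Some (s, nbR r p z0 t) \<and> cc r s (Some (i, p, z0)) y = botc r s z0 t)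
    \<or> (\<exists>pa za t. i = s \<and> odd p \<and> pa < 4 \<and> even pa \<and> za < r ^ s \<and> t < r \<and> (p, z0) = nbR r pa za t
         \<and> y = Some (s, pa, za) \<and> cc r s (Some (i, p, z0)) y = botc r s za t)"
proof -
  consider (t1) "treeE r s (Some (i, p, z0)) y" | (t2) "treeE r s y (Some (i, p, z0))"
    | (b1) "botE r s (Some (i, p, z0)) y" | (b2) "botE r s y (Some (i, p, z0))"
    using e yn by (auto simp: EE_def apexE_def)
  then show ?thesis
  proof cases
    case t1
    then obtain zz where h: "i < s" "y = Some (Suc i, p, zz)" "z0 = zz div r" "zz < r ^ Suc i"
      by (auto simp: treeE_def)
    have "zz = z0 * r + zz mod r" using h by simp
    moreover have "zz mod r < r" using r by simp
    moreover have "cc r s (Some (i, p, z0)) y = (colt r i z0 + 1 + zz mod r) mod Suc r"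
      using h by (simp add: cc_def)
    ultimately show ?thesis using h by (metis (no_types, lifting))
  next
    case t2
    then obtain i' zz where h: "i = Suc i'" "y = Some (i', p, zz div r)" "z0 = zz"
      by (auto simp: treeE_def)
    have "cc r s (Some (i, p, z0)) y = colt r i z0" using h by (simp add: cc_def)
    thus ?thesis using h by blast
  next
    case b1
    then obtain t where h: "i = s" "even p" "p < 4" "z0 < r ^ s" "t < r" "y = Some (s, nbR r p z0 t)"
      by (auto simp: botE_def)
    have "cc r s (Some (i, p, z0)) y = botc r s z0 (tof r p z0 (fst (nbR r p z0 t)) (snd (nbR r p z0 t)))"
      using h by (simp add: cc_def split: prod.split)
    also have "\<dots> = botc r s z0 t" using tof_nbR[of p t r z0] h by simp
    finally show ?thesis using h by blast
  next
    case b2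
    then obtain pa za t where h: "i = s" "pa < 4" "even pa" "za < r ^ s" "t < r"
      "(p, z0) = nbR r pa za t" "y = Some (s, pa, za)"
      by (auto simp: botE_def)
    have op: "odd p" using nbR_props'(2)[of pa za r s t] h s by (metis fst_conv)
    have "cc r s (Some (i, p, z0)) y = botc r s za (tof r pa za p z0)"
      using h(1,7) op by (simp add: cc_def)
    also have "\<dots> = botc r s za t" using tof_nbR[of pa t r za] h by (metis fst_conv snd_conv)
    finally show ?thesis using h op by blast
  qed
qed

lemma botc_CC: assumes "t1 < r" "t2 < r" "botc r s z t1 = botc r s z t2" shows "t1 = t2"
proof -
  define P where "P = colt r (s - 1) (z div r)"
  have P: "P < Suc r" unfolding P_def by (rule colt_lt)
  have r: "r > 0" using assms by simp
  have m1: "(z mod r + t1) mod r < r" "(z mod r + t2) mod r < r" using r by simp_all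
  show ?thesis
  proof (cases "t1 = 0"; cases "t2 = 0")
    assume "t1 = 0" "t2 = 0" thus ?thesis by simp
  next
    assume "t1 = 0" "t2 \<noteq> 0"
    hence "P = (P + 1 + (z mod r + t2) mod r) mod Suc r" using assms(3) by (simp add: botc_def Let_def P_def)
    thus ?thesis using F1[OF P m1(2)] by simp
  next
    assume "t1 \<noteq> 0" "t2 = 0"
    hence "P = (P + 1 + (z mod r + t1) mod r) mod Suc r" using assms(3) by (simp add: botc_def Let_def P_def)
    thus ?thesis using F1[OF P m1(1)] by simp
  next
    assume "t1 \<noteq> 0" "t2 \<noteq> 0"
    hence "(P + 1 + (z mod r + t1) mod r) mod Suc r = (P + 1 + (z mod r + t2) mod r) mod Suc r"
      using assms(3) by (simp add: botc_def Let_def P_def)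
    hence "(z mod r + t1) mod r = (z mod r + t2) mod r" using F2 m1 by blast
    thus ?thesis using F4 assms by blast
  qed
qed

lemma botc_DD: assumes "t1 < r" "t2 < r" "za1 div r = za2 div r" "botc r s za1 t1 = botc r s za2 t2"
  "(za1 mod r + 2*t1) mod r = (za2 mod r + 2*t2) mod r" shows "t1 = t2"
proof -
  define P where "P = colt r (s - 1) (za2 div r)"
  have b1: "botc r s za1 t1 = (if t1 = 0 then P else (P + 1 + (za1 mod r + t1) mod r) mod Suc r)"
    unfolding botc_def Let_def P_def assms(3) ..
  have b2: "botc r s za2 t2 = (if t2 = 0 then P else (P + 1 + (za2 mod r + t2) mod r) mod Suc r)"
    unfolding botc_def Let_def P_def ..
  have e: "(if t1 = 0 then P else (P + 1 + (za1 mod r + t1) mod r) mod Suc r)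
         = (if t2 = 0 then P else (P + 1 + (za2 mod r + t2) mod r) mod Suc r)"
    using assms(4) b1 b2 by simp
  have P: "P < Suc r" unfolding P_def by (rule colt_lt)
  have r: "r > 0" using assms by simp
  have m1: "(za1 mod r + t1) mod r < r" "(za2 mod r + t2) mod r < r" using r by simp_all
  show ?thesis
  proof (cases "t1 = 0"; cases "t2 = 0")
    assume "t1 = 0" "t2 = 0" thus ?thesis by simp
  next
    assume "t1 = 0" "t2 \<noteq> 0"
    hence "P = (P + 1 + (za2 mod r + t2) mod r) mod Suc r" using e by simp
    thus ?thesis using F1[OF P m1(2)] by simp
  next
    assume "t1 \<noteq> 0" "t2 = 0"
    hence "(P + 1 + (za1 mod r + t1) mod r) mod Suc r = P" using e by simp
    thus ?thesis using F1[OF P m1(1)] by simp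
  next
    assume "t1 \<noteq> 0" "t2 \<noteq> 0"
    hence "(P + 1 + (za1 mod r + t1) mod r) mod Suc r = (P + 1 + (za2 mod r + t2) mod r) mod Suc r"
      using e by simp
    hence "(za1 mod r + t1) mod r = (za2 mod r + t2) mod r" using F2 m1 by blast
    thus ?thesis using F6 assms by blast
  qed
qed

lemma col_AC: assumes "s \<ge> 1" "t < r" shows "colt r s z \<noteq> botc r s z t"
proof
  assume h: "colt r s z = botc r s z t"
  define P where "P = colt r (s - 1) (z div r)"
  have P: "P < Suc r" unfolding P_def by (rule colt_lt)
  have r: "r > 0" using assms by simp
  have cs: "colt r s z = (P + 1 + z mod r) mod Suc r" using colt_s[OF assms(1)] P_def by simp
  have m: "z mod r < r" "(z mod r + t) mod r < r" using r by simp_all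
  show False
  proof (cases "t = 0")
    case True
    hence "(P + 1 + z mod r) mod Suc r = P" using h cs by (simp add: botc_def Let_def P_def)
    thus False using F1[OF P m(1)] by simp
  next
    case False
    hence "(P + 1 + z mod r) mod Suc r = (P + 1 + (z mod r + t) mod r) mod Suc r"
      using h cs by (simp add: botc_def Let_def P_def)
    hence "z mod r = (z mod r + t) mod r" using F2 m by blast
    thus False using F3[of "z mod r" r t] m False assms by simp
  qed
qed

lemma col_AD: assumes "s \<ge> 1" "t < r" "za div r = z div r" "z mod r = (za mod r + 2*t) mod r"
  shows "colt r s z \<noteq> botc r s za t"
proof
  assume h: "colt r s z = botc r s za t"
  define P where "P = colt r (s - 1) (z div r)"
  have P: "P < Suc r" unfolding P_def by (rule colt_lt)
  have r: "r > 0" using assms by simp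
  have cs: "colt r s z = (P + 1 + z mod r) mod Suc r" using colt_s[OF assms(1)] P_def by simp
  have m: "z mod r < r" "(za mod r + t) mod r < r" using r by simp_all
  show False
  proof (cases "t = 0")
    case True
    hence "(P + 1 + z mod r) mod Suc r = P" using h cs assms(3) by (simp add: botc_def Let_def P_def)
    thus False using F1[OF P m(1)] by simp
  next
    case False
    hence "(P + 1 + z mod r) mod Suc r = (P + 1 + (za mod r + t) mod r) mod Suc r"
      using h cs assms(3) by (simp add: botc_def Let_def P_def)
    hence "z mod r = (za mod r + t) mod r" using F2 m by blast
    thus False using F5[of t r "za mod r"] assms False by simp
  qed
qed

lemma proper_main:
  assumes r: "r \<ge> 1" and s: "s \<ge> 1" and ey: "EE r s (Some (i, p, z0)) y" and ew: "EE r s (Some (i, p, z0)) w"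
    and yn: "y \<noteq> None" and wn: "w \<noteq> None" and eq: "cc r s (Some (i, p, z0)) y = cc r s (Some (i, p, z0)) w"
  shows "y = w"
proof -
  let ?u = "Some (i, p, z0)"
  have ct: "colt r i z0 < Suc r" by (rule colt_lt)
  from nb_cases[OF r s ey yn] consider
      (A) i' where "i = Suc i'" "y = Some (i', p, z0 div r)" "cc r s ?u y = colt r i z0"
    | (B) d where "d < r" "i < s" "y = Some (Suc i, p, z0 * r + d)" "cc r s ?u y = (colt r i z0 + 1 + d) mod Suc r"
    | (C) t where "t < r" "i = s" "even p" "p < 4" "z0 < r ^ s" "y = Some (s, nbR r p z0 t)" "cc r s ?u y = botc r s z0 t"
    | (D) pa za t where "i = s" "odd p" "pa < 4" "even pa" "za < r ^ s" "t < r" "(p, z0) = nbR r pa za t"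
         "y = Some (s, pa, za)" "cc r s ?u y = botc r s za t"
    by blast
  note Y = this
  from nb_cases[OF r s ew wn] consider
      (A) i' where "i = Suc i'" "w = Some (i', p, z0 div r)" "cc r s ?u w = colt r i z0"
    | (B) d where "d < r" "i < s" "w = Some (Suc i, p, z0 * r + d)" "cc r s ?u w = (colt r i z0 + 1 + d) mod Suc r"
    | (C) t where "t < r" "i = s" "even p" "p < 4" "z0 < r ^ s" "w = Some (s, nbR r p z0 t)" "cc r s ?u w = botc r s z0 t"
    | (D) pa za t where "i = s" "odd p" "pa < 4" "even pa" "za < r ^ s" "t < r" "(p, z0) = nbR r pa za t"
         "w = Some (s, pa, za)" "cc r s ?u w = botc r s za t"
    by blast
  note W = this
  have Dfacts: "za div r = z0 div r \<and> z0 mod r = (za mod r + 2*t) mod r"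
    if "pa < 4" "even pa" "za < r ^ s" "t < r" "(p, z0) = nbR r pa za t" for pa za t
  proof -
    have z: "snd (nbR r pa za t) = z0" using that(5) by (metis snd_conv)
    show ?thesis using nbR_props'(4,5)[of pa za r s t] that(1-4) s unfolding z by simp
  qed
  show ?thesis
  proof (cases rule: Y)
    case (A i1)
    note A1 = A
    show ?thesis
    proof (cases rule: W)
      case (A i2) thus ?thesis using A1 by simp
    next
      case (B d)
      have "colt r i z0 = (colt r i z0 + 1 + d) mod Suc r" by (metis A(3) B(4) eq)
      thus ?thesis using F1[OF ct \<open>d < r\<close>] by argo
    next
      case (C t)
      have "colt r s z0 = botc r s z0 t" by (metis A(3) C(2,7) eq)
      thus ?thesis using col_AC[OF s \<open>t < r\<close>, of z0] by argo
    next
      case (D pa za t)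
      have "colt r s z0 = botc r s za t" by (metis A(3) D(1,9) eq)
      moreover have "za div r = z0 div r \<and> z0 mod r = (za mod r + 2*t) mod r" using Dfacts D by blast
      ultimately show ?thesis using col_AD[OF s \<open>t < r\<close>, of za z0] by blast
    qed
  next
    case (B d1)
    note B1 = B
    show ?thesis
    proof (cases rule: W)
      case (A i2)
      have "colt r i z0 = (colt r i z0 + 1 + d1) mod Suc r" by (metis A(3) B1(4) eq)
      thus ?thesis using F1[OF ct \<open>d1 < r\<close>] by argo
    next
      case (B d2)
      have "(colt r i z0 + 1 + d1) mod Suc r = (colt r i z0 + 1 + d2) mod Suc r" by (metis B(4) B1(4) eq)
      hence "d1 = d2" using B1(1) B(1) F2[of d1 r d2 "colt r i z0"] by blast
      thus ?thesis using B1(3) B(3) by simp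
    next
      case (C t) thus ?thesis using B1 by simp
    next
      case (D pa za t) thus ?thesis using B1 by simp
    qed
  next
    case (C t1)
    note C1 = C
    show ?thesis
    proof (cases rule: W)
      case (A i2)
      have "colt r s z0 = botc r s z0 t1" by (metis A(3) C1(2,7) eq)
      thus ?thesis using col_AC[OF s \<open>t1 < r\<close>, of z0] by argo
    next
      case (B d) thus ?thesis using C1 by simp
    next
      case (C t2)
      have "botc r s z0 t1 = botc r s z0 t2" by (metis C(7) C1(7) eq)
      hence "t1 = t2" using botc_CC[of t1 r t2 s z0] C1(1) C(1) by blast
      thus ?thesis using C1 C by simp
    next
      case (D pa za t) thus ?thesis using C1 by simp
    qed
  next
    case (D pa1 za1 t1)
    note D1 = D
    show ?thesis
    proof (cases rule: W)
      case (A i2)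
      have "colt r s z0 = botc r s za1 t1" by (metis A(3) D1(1,9) eq)
      moreover have "za1 div r = z0 div r \<and> z0 mod r = (za1 mod r + 2*t1) mod r" using Dfacts D1 by blast
      ultimately show ?thesis using col_AD[OF s \<open>t1 < r\<close>, of za1 z0] by blast
    next
      case (B d) thus ?thesis using D1 by simp
    next
      case (C t) thus ?thesis using D1 by simp
    next
      case (D pa2 za2 t2)
      have f1: "za1 div r = z0 div r \<and> z0 mod r = (za1 mod r + 2*t1) mod r" using Dfacts D1 by blast
      have f2: "za2 div r = z0 div r \<and> z0 mod r = (za2 mod r + 2*t2) mod r" using Dfacts D by blast
      have "botc r s za1 t1 = botc r s za2 t2" by (metis D1(9) D(9) eq)
      moreover have "za1 div r = za2 div r" using f1 f2 by simp
      moreover have "(za1 mod r + 2*t1) mod r = (za2 mod r + 2*t2) mod r" using f1 f2 by simp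
      ultimately have tt: "t1 = t2" using botc_DD[of t1 r t2 za1 za2 s] D1(6) D(6) by blast
      have "nbL r p z0 t1 = (pa1, za1)" using nbLR'[of pa1 za1 r s t1] D1 s by (metis fst_conv snd_conv)
      moreover have "nbL r p z0 t2 = (pa2, za2)" using nbLR'[of pa2 za2 r s t2] D s by (metis fst_conv snd_conv)
      ultimately show ?thesis using tt D1(8) D(8) by simp
    qed
  qed
qed

lemma lay_eq: "lay r i = (\<lambda>(p, z). Some (i, p, z)) ` ({..<4} \<times> {..<r ^ i})"
  by (auto simp: lay_def)

lemma finite_lay: "finite (lay r i)" unfolding lay_eq by simp

lemma treeE_lay: assumes "treeE r s x y" shows "\<exists>i<s. x \<in> lay r i \<and> y \<in> lay r (Suc i)"
proof -
  obtain i p z where h: "i < s" "p < 4" "z < r ^ Suc i" "x = Some (i, p, z div r)" "y = Some (Suc i, p, z)"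
    using assms by (auto simp: treeE_def)
  have r: "r > 0" using h by (cases r) auto
  have "z div r < r ^ i" using h r by (simp add: div_less_iff_less_mult mult.commute)
  thus ?thesis using h by (auto simp: lay_def)
qed

lemma botE_lay: assumes "botE r s x y" "s \<ge> 1" shows "x \<in> lay r s \<and> y \<in> lay r s"
proof -
  obtain p z t where h: "p < 4" "even p" "z < r ^ s" "t < r" "x = Some (s, p, z)" "y = Some (s, nbR r p z t)"
    using assms by (auto simp: botE_def)
  have "y \<in> (\<lambda>t. Some (s, nbR r p z t)) ` {..<r}" using h by auto
  hence "y \<in> {w \<in> lay r s. EE r s (Some (s, p, z)) w}" using N_botL[of s p z r] h assms by simp
  thus ?thesis using h by (auto simp: lay_def)
qed

lemma apexE_lay: assumes "apexE x y" shows "x = None \<and> y \<in> lay r 0"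
  using assms by (auto simp: apexE_def lay_def)

lemma EE_cases_lay:
  assumes "EE r s x y" "s \<ge> 1"
  shows "x = None \<or> y = None \<or> (\<exists>i<s. (x \<in> lay r i \<and> y \<in> lay r (Suc i)) \<or> (y \<in> lay r i \<and> x \<in> lay r (Suc i)))
     \<or> (x \<in> lay r s \<and> y \<in> lay r s)"
  using assms treeE_lay[of r s x y] treeE_lay[of r s y x] botE_lay[of r s x y] botE_lay[of r s y x]
    apexE_lay[of x y] apexE_lay[of y x]
  unfolding EE_def by blast

lemma EE_V:
  assumes "EE r s x y" "s \<ge> 1"
  shows "x \<in> insert None (\<Union>i\<in>{..s}. lay r i) \<and> y \<in> insert None (\<Union>i\<in>{..s}. lay r i)"
proof -
  have "(x = None \<or> (\<exists>i\<le>s. x \<in> lay r i)) \<and> (y = None \<or> (\<exists>i\<le>s. y \<in> lay r i))"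
    using EE_cases_lay[OF assms] apexE_lay[of x y] apexE_lay[of y x] treeE_lay[of r s x y] treeE_lay[of r s y x]
      botE_lay[of r s x y] botE_lay[of r s y x] assms
    unfolding EE_def by (metis Suc_leI less_imp_le_nat order_refl zero_le)
  thus ?thesis by auto
qed

lemma EE_irrefl: "\<not> EE r s x x"
proof
  assume "EE r s x x"
  hence "treeE r s x x \<or> botE r s x x \<or> apexE x x" unfolding EE_def by blast
  thus False
  proof (elim disjE)
    assume "treeE r s x x" thus False by (auto simp: treeE_def)
  next
    assume "botE r s x x"
    then obtain p z t where h: "p < 4" "even p" "z < r ^ s" "t < r" "x = Some (s, p, z)"
        "(p, z) = nbR r p z t"
      by (auto simp: botE_def)
    have "p = fst (nbR r p z t)" using h(6) by (metis fst_conv)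
    hence "odd p \<or> p = Suc p \<or> p = (p + 3) mod 4" by (auto simp: nbR_def split: if_splits)
    thus False using h by presburger
  next
    assume "apexE x x" thus False by (auto simp: apexE_def)
  qed
qed

lemma stair_vt:
  assumes r: "r \<ge> 1" and s: "s \<ge> 1" and t: "even t" and sd: "s = (t - 1) div 2"
  shows "staircase r t 4 (insert None (\<Union>i\<in>{..s}. lay r i)) (EE r s) None (lay r)"
proof -
  let ?V = "insert None (\<Union>i\<in>{..s}. lay r i)"
  have sg: "simple_graph ?V (EE r s)"
    unfolding simple_graph_def
  proof (intro conjI allI impI)
    show "finite ?V" using finite_lay by simp
  next
    fix x y assume "EE r s x y" thus "EE r s y x" unfolding EE_def by blast
  next
    fix x show "\<not> EE r s x x" by (rule EE_irrefl)
  next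
    fix x y assume "EE r s x y" thus "x \<in> ?V" "y \<in> ?V" using EE_V s by blast+
  qed
  have c0: "card (lay r 0) = 4"
  proof -
    have "lay r 0 = (\<lambda>p. Some (0, p, 0)) ` {..<4}" by (auto simp: lay_def)
    thus ?thesis by (simp add: card_image inj_on_def)
  qed
  have ap: "\<forall>x. EE r s None x \<longleftrightarrow> x \<in> lay r 0"
    by (auto simp: EE_def treeE_def botE_def apexE_def lay_def)
  have tr: "\<forall>i. i < s \<longrightarrow> (\<forall>v\<in>lay r i. card {w\<in>lay r (Suc i). EE r s v w} = r)
         \<and> (\<forall>w\<in>lay r (Suc i). card {v\<in>lay r i. EE r s w v} = 1)"
  proof (intro allI impI conjI ballI)
    fix i v assume "i < s" "v \<in> lay r i"
    thus "card {w\<in>lay r (Suc i). EE r s v w} = r" using card_child by (auto simp: lay_def)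
  next
    fix i w assume "i < s" "w \<in> lay r (Suc i)"
    thus "card {v\<in>lay r i. EE r s w v} = 1" using N_parent by (auto simp: lay_def)
  qed
  have bt: "\<forall>v\<in>lay r s. card {w\<in>lay r s. EE r s v w} = r"
  proof
    fix v assume "v \<in> lay r s"
    then obtain p z where h: "v = Some (s, p, z)" "p < 4" "z < r ^ s" by (auto simp: lay_def)
    show "card {w\<in>lay r s. EE r s v w} = r"
      using card_botL[OF s _ h(2,3)] card_botR[OF s _ h(2,3)] h(1) by (cases "even p") auto
  qed
  have ed: "\<forall>x y. EE r s x y \<longrightarrow> x = None \<or> y = None
         \<or> (\<exists>i<s. (x \<in> lay r i \<and> y \<in> lay r (Suc i)) \<or> (y \<in> lay r i \<and> x \<in> lay r (Suc i)))
         \<or> (even t \<and> x \<in> lay r s \<and> y \<in> lay r s)"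
    using EE_cases_lay[OF _ s] t by blast
  have nl: "\<forall>i\<le>s. None \<notin> lay r i" by (auto simp: lay_def)
  have dj: "\<forall>i\<le>s. \<forall>j\<le>s. i \<noteq> j \<longrightarrow> lay r i \<inter> lay r j = {}" by (auto simp: lay_def)
  show ?thesis
    unfolding staircase_def Let_def sd[symmetric]
    using sg c0 ap tr bt ed nl dj t by simp
qed

lemma cc_sym: assumes "EE r s x y" "x \<noteq> None" "y \<noteq> None" shows "cc r s x y = cc r s y x"
proof -
  have "treeE r s x y \<or> treeE r s y x \<or> botE r s x y \<or> botE r s y x"
    using assms by (auto simp: EE_def apexE_def)
  moreover have "cc r s x y = cc r s y x" if "treeE r s x y" for x y
    using that by (auto simp: treeE_def cc_def)
  moreover have "cc r s u w = cc r s w u" if b: "botE r s u w" for u w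
  proof -
    obtain p z t where h: "p < 4" "even p" "z < r ^ s" "t < r" "u = Some (s, p, z)" "w = Some (s, nbR r p z t)"
      using b unfolding botE_def by blast
    obtain p' z' where n: "nbR r p z t = (p', z')" by (cases "nbR r p z t")
    have p: "p = 0 \<or> p = 2" using h by presburger
    have "p' = fst (nbR r p z t)" using n by simp
    hence "odd p'" using p by (cases "2*t < r") (auto simp: nbR_def)
    thus ?thesis using h n by (simp add: cc_def)
  qed
  ultimately show ?thesis by metis
qed

lemma proper_vt:
  assumes r: "r \<ge> 1" and s: "s \<ge> 1"
  shows "proper_edge_colouring_minus V (EE r s) None (r + 1) (cc r s)"
  unfolding proper_edge_colouring_minus_def
proof (intro conjI allI impI)
  fix x y assume h: "EE r s x y \<and> x \<noteq> None \<and> y \<noteq> None"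
  thus "cc r s x y = cc r s y x" using cc_sym by blast
  show "cc r s x y < r + 1" using cc_lt by simp
next
  fix x y z assume h: "EE r s x y \<and> EE r s x z \<and> y \<noteq> z \<and> x \<noteq> None \<and> y \<noteq> None \<and> z \<noteq> None"
  then obtain i p z0 where x: "x = Some (i, p, z0)" by (cases x) auto
  show "cc r s x y \<noteq> cc r s x z"
    using proper_main[OF r s, of i p z0 y z] h x by blast
qed

lemma transfer_stair:
  fixes f :: "'a \<Rightarrow> nat"
  assumes inj: "inj f" and st: "staircase r t a0 V E vinf L"
  shows "staircase r t a0 (f ` V) (\<lambda>x y. \<exists>a b. x = f a \<and> y = f b \<and> E a b) (f vinf) (\<lambda>i. f ` L i)"
proof -
  define E' where "E' = (\<lambda>x y. \<exists>a b. x = f a \<and> y = f b \<and> E a b)"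
  have Ef: "E' (f a) (f b) \<longleftrightarrow> E a b" for a b using inj unfolding E'_def by (auto dest: injD)
  have Ee: "E' x y \<Longrightarrow> \<exists>a b. x = f a \<and> y = f b \<and> E a b" for x y unfolding E'_def by blast
  have im: "{w \<in> f ` A. E' (f v) w} = f ` {w \<in> A. E v w}" for A v using Ef by auto
  have cim: "card {w \<in> f ` A. E' (f v) w} = card {w \<in> A. E v w}" for A v
    unfolding im by (rule card_image) (meson inj inj_on_subset subset_UNIV)
  define s where "s = (t - 1) div 2"
  have S: "simple_graph V E" "V = insert vinf (\<Union>i\<in>{..s}. L i)" "\<forall>i\<le>s. vinf \<notin> L i"
    "\<forall>i\<le>s. \<forall>j\<le>s. i \<noteq> j \<longrightarrow> L i \<inter> L j = {}" "card (L 0) = a0" "\<forall>x. E vinf x \<longleftrightarrow> x \<in> L 0"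
    "\<forall>i. (if even t then i < s else i + 2 \<le> s) \<longrightarrow>
           (\<forall>v\<in>L i. card {w\<in>L (Suc i). E v w} = r) \<and> (\<forall>w\<in>L (Suc i). card {v\<in>L i. E w v} = 1)"
    "even t \<longrightarrow> (\<forall>v\<in>L s. card {w\<in>L s. E v w} = r)"
    "odd t \<longrightarrow> (\<forall>v\<in>L (s - 1). card {w\<in>L s. E v w} = r) \<and> (\<forall>w\<in>L s. card {v\<in>L (s - 1). E w v} = r + 1)"
    "\<forall>x y. E x y \<longrightarrow> x = vinf \<or> y = vinf
         \<or> (\<exists>i<s. (x \<in> L i \<and> y \<in> L (Suc i)) \<or> (y \<in> L i \<and> x \<in> L (Suc i)))
         \<or> (even t \<and> x \<in> L s \<and> y \<in> L s)"
    using st unfolding staircase_def Let_def s_def by blast+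
  have injA: "inj_on f A" for A by (meson inj inj_on_subset subset_UNIV)
  have G1: "simple_graph (f ` V) E'"
    using S(1) unfolding simple_graph_def E'_def by (auto dest: injD[OF inj])
  have G2: "f ` V = insert (f vinf) (\<Union>i\<in>{..s}. f ` L i)" using S(2) by auto
  have G3: "\<forall>i\<le>s. f vinf \<notin> f ` L i" using S(3) inj by (auto dest: injD)
  have G4: "\<forall>i\<le>s. \<forall>j\<le>s. i \<noteq> j \<longrightarrow> f ` L i \<inter> f ` L j = {}" using S(4) inj by (auto dest: injD)
  have G5: "card (f ` L 0) = a0" using S(5) card_image[OF injA] by simp
  have G6: "\<forall>x. E' (f vinf) x \<longleftrightarrow> x \<in> f ` L 0" using S(6) Ef Ee by blast
  have G7: "\<forall>i. (if even t then i < s else i + 2 \<le> s) \<longrightarrow>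
           (\<forall>v\<in>f ` L i. card {w\<in>f ` L (Suc i). E' v w} = r) \<and> (\<forall>w\<in>f ` L (Suc i). card {v\<in>f ` L i. E' w v} = 1)"
    using S(7) cim by auto
  have G8: "even t \<longrightarrow> (\<forall>v\<in>f ` L s. card {w\<in>f ` L s. E' v w} = r)" using S(8) cim by auto
  have G9: "odd t \<longrightarrow> (\<forall>v\<in>f ` L (s - 1). card {w\<in>f ` L s. E' v w} = r) \<and> (\<forall>w\<in>f ` L s. card {v\<in>f ` L (s - 1). E' w v} = r + 1)"
    using S(9) cim by auto
  have G10: "\<forall>x y. E' x y \<longrightarrow> x = f vinf \<or> y = f vinf
         \<or> (\<exists>i<s. (x \<in> f ` L i \<and> y \<in> f ` L (Suc i)) \<or> (y \<in> f ` L i \<and> x \<in> f ` L (Suc i)))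
         \<or> (even t \<and> x \<in> f ` L s \<and> y \<in> f ` L s)"
  proof (intro allI impI)
    fix x y assume "E' x y"
    then obtain a b where ab: "x = f a" "y = f b" "E a b" using Ee by blast
    show "x = f vinf \<or> y = f vinf
         \<or> (\<exists>i<s. (x \<in> f ` L i \<and> y \<in> f ` L (Suc i)) \<or> (y \<in> f ` L i \<and> x \<in> f ` L (Suc i)))
         \<or> (even t \<and> x \<in> f ` L s \<and> y \<in> f ` L s)"
      using S(10) ab by blast
  qed
  show ?thesis unfolding staircase_def Let_def s_def[symmetric] E'_def[symmetric]
    using G1 G2 G3 G4 G5 G6 G7 G8 G9 G10 by blast
qed

lemma transfer_col:
  fixes f :: "'a \<Rightarrow> nat"
  assumes inj: "inj f" and pc: "proper_edge_colouring_minus V E vinf k c"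
  shows "proper_edge_colouring_minus (f ` V) (\<lambda>x y. \<exists>a b. x = f a \<and> y = f b \<and> E a b) (f vinf) k
           (\<lambda>x y. c (inv f x) (inv f y))"
  using pc inj unfolding proper_edge_colouring_minus_def
  by (auto simp: inv_f_f dest: injD) (metis inv_f_f)+

theorem mainTheorem13:
  fixes r t :: nat
  assumes "r \<ge> 3" and "t \<ge> 6" and "even t"
  shows "\<exists>(V :: nat set) E vinf L c.
           staircase r t 4 V E vinf L \<and> proper_edge_colouring_minus V E vinf (r + 1) c"
proof -
  define s where "s = (t - 1) div 2"
  have s1: "s \<ge> 1" using assms(2) unfolding s_def by presburger
  have r1: "r \<ge> 1" using assms(1) by simp
  have st: "staircase r t 4 (insert None (\<Union>i\<in>{..s}. lay r i)) (EE r s) None (lay r)"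
    by (rule stair_vt[OF r1 s1 assms(3) s_def])
  have pc: "proper_edge_colouring_minus (insert None (\<Union>i\<in>{..s}. lay r i)) (EE r s) None (r + 1) (cc r s)"
    by (rule proper_vt[OF r1 s1])
  show ?thesis using transfer_stair[OF inj_to_nat st] transfer_col[OF inj_to_nat pc] by blast
qed

end
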